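(* Let $x\in[0,1]\setminus\mathcal E$. Then for every $n\ge0$, $x\in I_n(x)$, where $I_n(x)$ is the open interval with endpoints $a_n(x)$ and $b_n(x)=a_n(x)+\varepsilon_n(x)\ell_n(x)$. Moreover, the sign of the slope of $T^n$ on $I_n(x)$ is $\varepsilon_n(x)$, $T^n(a_n(x))=0$, and $T^n$ maps $I_n(x)$ onto $(0,1)$.
   Context: $T:[0,1]\to[0,1]$ is $T(x)=3x$ on $[0,\frac13)$, $6x-2$ on $[\frac13,\frac12)$, $4-6x$ on $[\frac12,\frac23)$, $3x-2$ on $[\frac23,1]$. Let $U(x)=0,1,2,3$ and $\widetilde U(x)=0,\frac13,\frac23,\frac23$ on these four intervals respectively. For $x\in[0,1]$, $n\ge0$: $u_n(x)=U(T^nx)$, $\widetilde u_n(x)=\widetilde U(T^nx)$; $\beta_i(x,n)=\#\{k<n:u_k(x)=i\}$, $\beta_{i,j}(x,n)=\beta_i(x,n)+\beta_j(x,n)$; $\varepsilon_n(x)=(-1)^{\beta_2(x,n)}$, $\ell_n(x)=3^{-\beta_{0,3}(x,n)}6^{-\beta_{1,2}(x,n)}$, $a_0(x)=0$ and $a_n(x)=\sum_{k=0}^{n-1}\widetilde u_k(x)\varepsilon_k(x)\ell_k(x)$ for $n\ge1$. $\mathcal E$ is the set of $x\in[0,1]$ whose sequence $(u_n(x))_n$ is eventually constant equal to $0$ or eventually constant equal to $3$. The open interval with endpoints $a,b$ means the set of points strictly between $a$ and $b$ (even if $b<a$). *)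

theory Defs
  imports Complex_Main
begin

definition T :: "real \<Rightarrow> real" where
  "T x = (if x < 1/3 then 3*x
          else if x < 1/2 then 6*x - 2
          else if x < 2/3 then 4 - 6*x
          else 3*x - 2)"

definition U :: "real \<Rightarrow> nat" where
  "U x = (if x < 1/3 then 0 else if x < 1/2 then 1 else if x < 2/3 then 2 else 3)"

definition Ut :: "real \<Rightarrow> real" where
  "Ut x = (if x < 1/3 then 0 else if x < 1/2 then 1/3 else 2/3)"

definition u :: "nat \<Rightarrow> real \<Rightarrow> nat" where
  "u n x = U ((T ^^ n) x)"

definition ut :: "nat \<Rightarrow> real \<Rightarrow> real" where
  "ut n x = Ut ((T ^^ n) x)"

definition beta :: "nat \<Rightarrow> real \<Rightarrow> nat \<Rightarrow> nat" where
  "beta i x n = card {k. k < n \<and> u k x = i}"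

definition eps :: "real \<Rightarrow> nat \<Rightarrow> real" where
  "eps x n = (-1) ^ beta 2 x n"

definition ell :: "real \<Rightarrow> nat \<Rightarrow> real" where
  "ell x n = (1/3) ^ (beta 0 x n + beta 3 x n) * (1/6) ^ (beta 1 x n + beta 2 x n)"

definition a :: "real \<Rightarrow> nat \<Rightarrow> real" where
  "a x n = (\<Sum>k<n. ut k x * eps x k * ell x k)"

definition b :: "real \<Rightarrow> nat \<Rightarrow> real" where
  "b x n = a x n + eps x n * ell x n"

definition open_between :: "real \<Rightarrow> real \<Rightarrow> real set" where
  "open_between p q = {min p q <..< max p q}"

definition I :: "nat \<Rightarrow> real \<Rightarrow> real set" where
  "I n x = open_between (a x n) (b x n)"

definition E :: "real set" where
  "E = {x \<in> {0..1}. (\<exists>N. \<forall>n\<ge>N. u n x = 0) \<or> (\<exists>N. \<forall>n\<ge>N. u n x = 3)}"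

end

theory Submission
  imports Defs
begin

lemma T0: "T 0 = 0" by (simp add: T_def)
lemma T1: "T 1 = 1" by (simp add: T_def)

lemma funpow_fix: "f c = c \<Longrightarrow> (f ^^ j) c = c"
  by (induction j) auto

lemma orbit:
  assumes "x \<in> {0..1} - E"
  shows "(T ^^ m) x \<noteq> 0 \<and> (T ^^ m) x \<noteq> 1"
proof (rule conjI; rule notI)
  assume h: "(T ^^ m) x = 0"
  have "\<forall>k\<ge>m. u k x = 0"
  proof (intro allI impI)
    fix k assume "m \<le> k"
    then obtain j where k: "k = j + m" by (metis add.commute le_add_diff_inverse)
    have "(T ^^ k) x = (T ^^ j) ((T ^^ m) x)" by (simp add: k funpow_add)
    also have "\<dots> = 0" using h funpow_fix[of T 0 j] T0 by simp
    finally show "u k x = 0" by (simp add: u_def U_def)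
  qed
  then have "x \<in> E" using assms unfolding E_def by blast
  then show False using assms by blast
next
  assume h: "(T ^^ m) x = 1"
  have "\<forall>k\<ge>m. u k x = 3"
  proof (intro allI impI)
    fix k assume "m \<le> k"
    then obtain j where k: "k = j + m" by (metis add.commute le_add_diff_inverse)
    have "(T ^^ k) x = (T ^^ j) ((T ^^ m) x)" by (simp add: k funpow_add)
    also have "\<dots> = 1" using h funpow_fix[of T 1 j] T1 by simp
    finally show "u k x = 3" by (simp add: u_def U_def)
  qed
  then have "x \<in> E" using assms unfolding E_def by blast
  then show False using assms by blast
qed

lemma beta_Suc: "beta i x (Suc n) = beta i x n + (if u n x = i then 1 else 0)"
proof (cases "u n x = i")
  case True
  have "{k. k < Suc n \<and> u k x = i} = insert n {k. k < n \<and> u k x = i}"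
    using True by auto
  then show ?thesis using True by (simp add: beta_def)
next
  case False
  have "{k. k < Suc n \<and> u k x = i} = {k. k < n \<and> u k x = i}"
    using False less_Suc_eq by auto
  then show ?thesis using False by (simp add: beta_def)
qed

lemma eps_Suc: "eps x (Suc n) = (if u n x = 2 then - eps x n else eps x n)"
  by (simp add: eps_def beta_Suc)

lemma ell_Suc: "ell x (Suc n) = ell x n * (if u n x = 0 \<or> u n x = 3 then 1/3 else 1/6)"
proof -
  have "u n x \<in> {0,1,2,3}" by (simp add: u_def U_def)
  then show ?thesis by (auto simp: ell_def beta_Suc)
qed

lemma a_Suc: "a x (Suc n) = a x n + ut n x * eps x n * ell x n"
  by (simp add: a_def)

lemma a0: "a x 0 = 0" by (simp add: a_def)
lemma eps0: "eps x 0 = 1" by (simp add: eps_def beta_def)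
lemma ell0: "ell x 0 = 1" by (simp add: ell_def beta_def)

lemma mem_ob:
  assumes "l > 0" "e = 1 \<or> e = -1"
  shows "y \<in> open_between p (p + e * l) \<longleftrightarrow> (\<exists>t. 0 < t \<and> t < 1 \<and> y = p + t * e * l)"
  using assms(2)
proof
  assume e: "e = 1"
  show ?thesis
  proof
    assume "y \<in> open_between p (p + e * l)"
    then have "p < y" "y < p + l" using e assms(1) by (auto simp: open_between_def)
    then show "\<exists>t. 0 < t \<and> t < 1 \<and> y = p + t * e * l"
      using assms(1) e by (intro exI[of _ "(y - p)/l"]) (auto simp: field_simps)
  next
    assume "\<exists>t. 0 < t \<and> t < 1 \<and> y = p + t * e * l"
    then obtain t where "0 < t" "t < 1" "y = p + t * e * l" by blast
    then show "y \<in> open_between p (p + e * l)" using e assms(1)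
      by (auto simp: open_between_def)
  qed
next
  assume e: "e = -1"
  show ?thesis
  proof
    assume "y \<in> open_between p (p + e * l)"
    then have "p - l < y" "y < p" using e assms(1) by (auto simp: open_between_def)
    then show "\<exists>t. 0 < t \<and> t < 1 \<and> y = p + t * e * l"
      using assms(1) e by (intro exI[of _ "(p - y)/l"]) (auto simp: field_simps)
  next
    assume "\<exists>t. 0 < t \<and> t < 1 \<and> y = p + t * e * l"
    then obtain t where "0 < t" "t < 1" "y = p + t * e * l" by blast
    then show "y \<in> open_between p (p + e * l)" using e assms(1)
      by (auto simp: open_between_def)
  qed
qed

lemma main:
  assumes x: "x \<in> {0..1} - E"
  shows "ell x n > 0 \<and> (eps x n = 1 \<or> eps x n = -1) \<and> (T ^^ n) (a x n) = 0
    \<and> (\<forall>t. 0 < t \<and> t < 1 \<longrightarrow> (T ^^ n) (a x n + t * eps x n * ell x n) = t)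
    \<and> (\<exists>t. 0 < t \<and> t < 1 \<and> x = a x n + t * eps x n * ell x n)"
proof (induction n)
  case 0
  have "x \<noteq> 0" "x \<noteq> 1" using orbit[OF x, of 0] by auto
  then show ?case using x by (auto simp: a0 eps0 ell0)
next
  case (Suc n)
  define A where "A = a x n"
  define e where "e = eps x n"
  define l where "l = ell x n"
  have l: "l > 0" and e: "e = 1 \<or> e = -1" and TA: "(T ^^ n) A = 0"
    and Tt: "\<And>t. 0 < t \<Longrightarrow> t < 1 \<Longrightarrow> (T ^^ n) (A + t * e * l) = t"
    using Suc.IH by (auto simp: A_def e_def l_def)
  obtain t0 where t0: "0 < t0" "t0 < 1" "x = A + t0 * e * l"
    using Suc.IH by (auto simp: A_def e_def l_def)
  have Tx: "(T ^^ n) x = t0" using Tt t0 by simp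
  have "(T ^^ Suc n) x \<noteq> 0" "(T ^^ Suc n) x \<noteq> 1" using orbit[OF x, of "Suc n"] by auto
  then have nz: "T t0 \<noteq> 0" "T t0 \<noteq> 1" using Tx by auto
  have uu: "u n x = U t0" "ut n x = Ut t0" using Tx by (auto simp: u_def ut_def)
  have ee: "e * e = 1" using e by auto
  show ?case
  proof (cases "t0 < 1/3")
    case c: True
    have d: "u n x = 0" "ut n x = 0" using c uu by (auto simp: U_def Ut_def)
    have aS: "a x (Suc n) = A" "eps x (Suc n) = e" "ell x (Suc n) = l / 3"
      by (simp_all add: a_Suc eps_Suc ell_Suc d A_def e_def l_def)
    have 1: "(T ^^ Suc n) (a x (Suc n) + t * eps x (Suc n) * ell x (Suc n)) = t"
      if "0 < t" "t < 1" for t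
    proof -
      have "a x (Suc n) + t * eps x (Suc n) * ell x (Suc n) = A + (t/3) * e * l" using aS by simp
      then show ?thesis using Tt[of "t/3"] that by (simp add: T_def)
    qed
    have 2: "x = a x (Suc n) + (3*t0) * eps x (Suc n) * ell x (Suc n)" using aS t0 by simp
    have 3: "(T ^^ Suc n) (a x (Suc n)) = 0" using aS TA T0 by simp
    have ex: "\<exists>t. 0 < t \<and> t < 1 \<and> x = a x (Suc n) + t * eps x (Suc n) * ell x (Suc n)"
      by (rule exI[of _ "3*t0"]) (use 2 t0(1,2) c in simp)
    have p1: "ell x (Suc n) > 0" using aS l by simp
    have p2: "eps x (Suc n) = 1 \<or> eps x (Suc n) = -1" using aS e by auto
    show ?thesis using p1 p2 3 1 ex by blast
  next
    case c1: False
    show ?thesis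
    proof (cases "t0 < 1/2")
      case c: True
      have "t0 \<noteq> 1/3" using nz by (auto simp: T_def)
      then have c': "1/3 < t0" using c1 by auto
      have d: "u n x = 1" "ut n x = 1/3" using c c1 uu by (auto simp: U_def Ut_def)
      have aS: "a x (Suc n) = A + (1/3) * e * l" "eps x (Suc n) = e" "ell x (Suc n) = l / 6"
        by (simp_all add: a_Suc eps_Suc ell_Suc d A_def e_def l_def)
      have 1: "(T ^^ Suc n) (a x (Suc n) + t * eps x (Suc n) * ell x (Suc n)) = t"
        if "0 < t" "t < 1" for t
      proof -
        have "a x (Suc n) + t * eps x (Suc n) * ell x (Suc n) = A + (1/3 + t/6) * e * l"
          using aS by (simp add: algebra_simps)
        then show ?thesis using Tt[of "1/3 + t/6"] that by (simp add: T_def)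
      qed
      have 2: "x = a x (Suc n) + (6*t0-2) * eps x (Suc n) * ell x (Suc n)" using aS t0
        by (simp add: algebra_simps)
      have 3: "(T ^^ Suc n) (a x (Suc n)) = 0"
        using Tt[of "1/3"] aS by (simp add: T_def)
      have ex: "\<exists>t. 0 < t \<and> t < 1 \<and> x = a x (Suc n) + t * eps x (Suc n) * ell x (Suc n)"
        by (rule exI[of _ "6*t0-2"]) (use 2 t0(1,2) c c' in simp)
      have p1: "ell x (Suc n) > 0" using aS l by simp
      have p2: "eps x (Suc n) = 1 \<or> eps x (Suc n) = -1" using aS e by auto
      show ?thesis using p1 p2 3 1 ex by blast
    next
      case c2: False
      show ?thesis
      proof (cases "t0 < 2/3")
        case c: True
        have "t0 \<noteq> 1/2" using nz by (auto simp: T_def)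
        then have c': "1/2 < t0" using c2 by auto
        have d: "u n x = 2" "ut n x = 2/3" using c c1 c2 uu by (auto simp: U_def Ut_def)
        have aS: "a x (Suc n) = A + (2/3) * e * l" "eps x (Suc n) = - e" "ell x (Suc n) = l / 6"
          by (simp_all add: a_Suc eps_Suc ell_Suc d A_def e_def l_def)
        have 1: "(T ^^ Suc n) (a x (Suc n) + t * eps x (Suc n) * ell x (Suc n)) = t"
          if "0 < t" "t < 1" for t
        proof -
          have "a x (Suc n) + t * eps x (Suc n) * ell x (Suc n) = A + (2/3 - t/6) * e * l"
            using aS by (simp add: algebra_simps)
          then show ?thesis using Tt[of "2/3 - t/6"] that by (simp add: T_def)
        qed
        have 2: "x = a x (Suc n) + (4-6*t0) * eps x (Suc n) * ell x (Suc n)" using aS t0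
          by (simp add: algebra_simps)
        have 3: "(T ^^ Suc n) (a x (Suc n)) = 0"
          using Tt[of "2/3"] aS by (simp add: T_def)
        have ex: "\<exists>t. 0 < t \<and> t < 1 \<and> x = a x (Suc n) + t * eps x (Suc n) * ell x (Suc n)"
          by (rule exI[of _ "4-6*t0"]) (use 2 t0(1,2) c c' in simp)
        have p1: "ell x (Suc n) > 0" using aS l by simp
        have p2: "eps x (Suc n) = 1 \<or> eps x (Suc n) = -1" using aS e by auto
        show ?thesis using p1 p2 3 1 ex by blast
      next
        case c3: False
        have "t0 \<noteq> 2/3" using nz by (auto simp: T_def)
        then have c': "2/3 < t0" using c3 by auto
        have d: "u n x = 3" "ut n x = 2/3" using c1 c2 c3 uu by (auto simp: U_def Ut_def)
        have aS: "a x (Suc n) = A + (2/3) * e * l" "eps x (Suc n) = e" "ell x (Suc n) = l / 3"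
          by (simp_all add: a_Suc eps_Suc ell_Suc d A_def e_def l_def)
        have 1: "(T ^^ Suc n) (a x (Suc n) + t * eps x (Suc n) * ell x (Suc n)) = t"
          if "0 < t" "t < 1" for t
        proof -
          have "a x (Suc n) + t * eps x (Suc n) * ell x (Suc n) = A + (2/3 + t/3) * e * l"
            using aS by (simp add: algebra_simps)
          then show ?thesis using Tt[of "2/3 + t/3"] that by (simp add: T_def)
        qed
        have 2: "x = a x (Suc n) + (3*t0-2) * eps x (Suc n) * ell x (Suc n)" using aS t0
          by (simp add: algebra_simps)
        have 3: "(T ^^ Suc n) (a x (Suc n)) = 0"
          using Tt[of "2/3"] aS by (simp add: T_def)
        have ex: "\<exists>t. 0 < t \<and> t < 1 \<and> x = a x (Suc n) + t * eps x (Suc n) * ell x (Suc n)"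
          by (rule exI[of _ "3*t0-2"]) (use 2 t0(1,2) c' in simp)
        have p1: "ell x (Suc n) > 0" using aS l by simp
        have p2: "eps x (Suc n) = 1 \<or> eps x (Suc n) = -1" using aS e by auto
        show ?thesis using p1 p2 3 1 ex by blast
      qed
    qed
  qed
qed

lemma final_aux:
  fixes f :: "real \<Rightarrow> real"
  assumes l: "l > 0" and e: "e = 1 \<or> e = -1" and TA: "f A = 0"
    and Tt: "\<forall>t. 0 < t \<and> t < 1 \<longrightarrow> f (A + t * e * l) = t"
    and ex: "\<exists>t. 0 < t \<and> t < 1 \<and> x = A + t * e * l"
  shows "x \<in> open_between A (A + e * l)
    \<and> (\<exists>s::real. sgn s = e \<and> (\<forall>y \<in> open_between A (A + e * l). f y = f A + s * (y - A)))
    \<and> f A = 0 \<and> f ` open_between A (A + e * l) = {0<..<1}"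
proof -
  have Ieq: "y \<in> open_between A (A + e * l) \<longleftrightarrow> (\<exists>t. 0 < t \<and> t < 1 \<and> y = A + t * e * l)" for y
    by (rule mem_ob[OF l e])
  have ee: "e * e = 1" using e by auto
  have 1: "x \<in> open_between A (A + e * l)" using Ieq[of x] ex by blast
  have 2: "sgn (e / l) = e" using e l by auto
  have 3: "f y = f A + (e / l) * (y - A)" if yI: "y \<in> open_between A (A + e * l)" for y
  proof -
    obtain t where t: "0 < t" "t < 1" "y = A + t * e * l" using yI Ieq[of y] by blast
    have "(e / l) * (y - A) = t * (e * e) * (l / l)" using t(3) by (simp add: field_simps)
    also have "\<dots> = t" using ee l by simp
    finally have "(e / l) * (y - A) = t" .
    moreover have "f y = t" unfolding t(3) using Tt t(1,2) by blast
    ultimately show ?thesis using TA by simp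
  qed
  have 4: "f ` open_between A (A + e * l) = {0<..<1}"
  proof
    show "f ` open_between A (A + e * l) \<subseteq> {0<..<1}"
    proof
      fix z assume "z \<in> f ` open_between A (A + e * l)"
      then obtain y where y: "y \<in> open_between A (A + e * l)" "z = f y" by blast
      obtain t where t: "0 < t" "t < 1" "y = A + t * e * l" using y(1) Ieq[of y] by blast
      have "f y = t" unfolding t(3) using Tt t(1,2) by blast
      then show "z \<in> {0<..<1}" using y(2) t by simp
    qed
    show "{0<..<1} \<subseteq> f ` open_between A (A + e * l)"
    proof
      fix t :: real assume "t \<in> {0<..<1}"
      then have t: "0 < t" "t < 1" by auto
      have "A + t * e * l \<in> open_between A (A + e * l)" using Ieq[of "A + t * e * l"] t by blast
      moreover have "f (A + t * e * l) = t" using Tt t(1,2) by blast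
      ultimately show "t \<in> f ` open_between A (A + e * l)" by (metis image_eqI)
    qed
  qed
  have 5: "\<exists>s::real. sgn s = e \<and> (\<forall>y \<in> open_between A (A + e * l). f y = f A + s * (y - A))"
  proof (intro exI[of _ "e / l"] conjI ballI)
    show "sgn (e / l) = e" by (rule 2)
    fix y assume "y \<in> open_between A (A + e * l)"
    then show "f y = f A + (e / l) * (y - A)" by (rule 3)
  qed
  show ?thesis by (intro conjI 1 5 TA 4)
qed

theorem proposition2p3:
  fixes x :: real and n :: nat
  assumes "x \<in> {0..1} - E"
  shows "x \<in> I n x
    \<and> (\<exists>s::real. sgn s = eps x n \<and>
          (\<forall>y \<in> I n x. (T ^^ n) y = (T ^^ n) (a x n) + s * (y - a x n)))
    \<and> (T ^^ n) (a x n) = 0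
    \<and> (T ^^ n) ` I n x = {0<..<1}"
proof -
  have M: "ell x n > 0 \<and> (eps x n = 1 \<or> eps x n = -1) \<and> (T ^^ n) (a x n) = 0
    \<and> (\<forall>t. 0 < t \<and> t < 1 \<longrightarrow> (T ^^ n) (a x n + t * eps x n * ell x n) = t)
    \<and> (\<exists>t. 0 < t \<and> t < 1 \<and> x = a x n + t * eps x n * ell x n)"
    by (rule main[OF assms])
  have Ieq: "I n x = open_between (a x n) (a x n + eps x n * ell x n)"
    by (simp add: I_def b_def)
  show ?thesis unfolding Ieq
    by (rule final_aux) (use M in \<open>blast+\<close>)
qed

end
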